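(* If $C \subseteq \mathbb{Z}$ is a nonempty finite set, then there exists a set $W \subseteq \mathbb{Z}$ such that $C$ is a minimal additive complement to $W$.
   Context: For $X, Y \subseteq \mathbb{Z}$, $X + Y = \{x + y : x \in X, y \in Y\}$. A set $C \subseteq \mathbb{Z}$ is an additive complement to $W \subseteq \mathbb{Z}$ if $C + W = \mathbb{Z}$; it is a minimal additive complement to $W$ if moreover no proper subset of $C$ is an additive complement to $W$. *)

theory Defs
  imports Main
begin

definition sumset :: "int set \<Rightarrow> int set \<Rightarrow> int set" where
  "sumset X Y = {x + y | x y. x \<in> X \<and> y \<in> Y}"

definition additive_complement :: "int set \<Rightarrow> int set \<Rightarrow> bool" where
  "additive_complement C W \<longleftrightarrow> sumset C W = UNIV"

definition minimal_additive_complement :: "int set \<Rightarrow> int set \<Rightarrow> bool" where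
  "minimal_additive_complement C W \<longleftrightarrow>
     additive_complement C W \<and> (\<forall>C'. C' \<subset> C \<longrightarrow> \<not> additive_complement C' W)"

end

theory Submission
  imports Defs
begin

lemma big_mult:
  fixes L k :: int
  assumes "k \<noteq> 0" "L \<ge> 0"
  shows "L \<le> \<bar>L * k\<bar>"
proof -
  have "1 \<le> \<bar>k\<bar>" using assms by linarith
  hence "L * 1 \<le> L * \<bar>k\<bar>" using assms by (intro mult_left_mono) auto
  thus ?thesis by (simp add: abs_mult assms)
qed

theorem theorem9:
  fixes C :: "int set"
  assumes "finite C" and "C \<noteq> {}"
  shows "\<exists>W :: int set. minimal_additive_complement C W"
proof -
  define R where "R = Max (abs ` C)"
  have R: "\<And>c. c \<in> C \<Longrightarrow> \<bar>c\<bar> \<le> R" unfolding R_def using assms by auto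
  obtain c0 where c0: "c0 \<in> C" using assms by auto
  have R0: "R \<ge> 0" using R[OF c0] by linarith
  define L where "L = 4*R+1"
  define B where "B = {(L+1)*d - e | d e. d \<in> C \<and> e \<in> C \<and> d \<noteq> e}"
  define W where "W = - B"
  have A: "False" if "c \<in> C" "d \<in> C" "e \<in> C" "d \<noteq> e" "L*c = (L+1)*d - e" for c d e
  proof -
    have eq: "L*(c-d) = d - e" using that(5) by (simp add: algebra_simps)
    have "c \<noteq> d" using eq that(4) by auto
    hence "L \<le> \<bar>L*(c-d)\<bar>" using big_mult[of "c-d" L] L_def R0 by auto
    moreover have "\<bar>d - e\<bar> \<le> 2*R" using R[OF that(2)] R[OF that(3)] by linarith
    ultimately show False using eq L_def R0 by linarith
  qed
  have cover: "sumset C W = UNIV"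
  proof -
    {
      fix n :: int
      define m where "m = Min C"
      define M where "M = Max C"
      have mC: "m \<in> C" and MC: "M \<in> C" unfolding m_def M_def using assms by auto
      have mle: "\<And>c. c \<in> C \<Longrightarrow> m \<le> c" and Mge: "\<And>c. c \<in> C \<Longrightarrow> c \<le> M"
        unfolding m_def M_def using assms by auto
      have "\<exists>x y. n = x + y \<and> x \<in> C \<and> y \<in> W"
      proof (cases "n - m \<in> B \<and> n - M \<in> B")
        case False
        thus ?thesis using mC MC unfolding W_def by (metis ComplI add_diff_cancel_left' add.commute diff_add_cancel)
      next
        case True
        then obtain d1 c1 d2 c2 where h: "d1 \<in> C" "c1 \<in> C" "d1 \<noteq> c1" "n - m = (L+1)*d1 - c1"
          "d2 \<in> C" "c2 \<in> C" "d2 \<noteq> c2" "n - M = (L+1)*d2 - c2"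
          unfolding B_def by blast
        have eq: "(L+1)*(d1-d2) = M - m + c1 - c2" using h(4) h(8) by (simp add: algebra_simps)
        have bnd: "0 \<le> M - m + c1 - c2" "M - m + c1 - c2 \<le> 4*R"
          using mle[OF h(2)] Mge[OF h(6)] R[OF mC] R[OF MC] R[OF h(2)] R[OF h(6)] by linarith+
        have "d1 = d2"
        proof (rule ccontr)
          assume "d1 \<noteq> d2"
          hence "L+1 \<le> \<bar>(L+1)*(d1-d2)\<bar>" using big_mult[of "d1-d2" "L+1"] L_def R0 by auto
          thus False using eq bnd L_def by linarith
        qed
        hence "c1 = m" using eq bnd mle[OF h(2)] Mge[OF h(6)] by auto
        hence nd: "n = (L+1)*d1" using h(4) by simp
        have "n - d1 \<notin> B"
        proof
          assume "n - d1 \<in> B"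
          then obtain d e where "d \<in> C" "e \<in> C" "d \<noteq> e" "n - d1 = (L+1)*d - e"
            unfolding B_def by blast
          moreover have "n - d1 = L*d1" using nd by (simp add: algebra_simps)
          ultimately show False using A[OF h(1)] by metis
        qed
        thus ?thesis using h(1) unfolding W_def by (intro exI[of _ d1] exI[of _ "n - d1"]) auto
      qed
      hence "n \<in> sumset C W" unfolding sumset_def by blast
    }
    thus ?thesis by auto
  qed
  have minimal: "\<not> additive_complement C' W" if sub: "C' \<subset> C" for C'
  proof
    assume "additive_complement C' W"
    hence "sumset C' W = UNIV" unfolding additive_complement_def .
    obtain c where c: "c \<in> C" "c \<notin> C'" using sub by blast
    have "(L+1)*c \<in> sumset C' W" using \<open>sumset C' W = UNIV\<close> by simp
    then obtain x y where xy: "(L+1)*c = x + y" "x \<in> C'" "y \<in> W" unfolding sumset_def by blast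
    have "x \<in> C" "x \<noteq> c" using xy(2) sub c by auto
    hence "y \<in> B" unfolding B_def using c(1) xy(1) by (intro CollectI exI[of _ c] exI[of _ x]) auto
    thus False using xy(3) unfolding W_def by simp
  qed
  have "minimal_additive_complement C W"
    unfolding minimal_additive_complement_def
  proof (intro conjI allI impI)
    show "additive_complement C W" unfolding additive_complement_def by (rule cover)
  next
    fix C' assume "C' \<subset> C"
    thus "\<not> additive_complement C' W" by (rule minimal)
  qed
  thus ?thesis by (rule exI)
qed

end
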